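(* Let $I$ be a finite set of players and, for each $\nu\in I$, let $\succeq_\nu$ be a binary relation on $\mathbb{R}^n=\prod_{\nu\in I}\mathbb{R}^{n_\nu}$. Define $T:\mathbb{R}^n\rightrightarrows\mathbb{R}^n$ by $$T(x)=\prod_{\nu\in I}\operatorname{conv}\big(N_\nu(x)\cap S_\nu(0,1)\big).$$ Assume that the set-valued map $U^s_\nu:\mathbb{R}^n\rightrightarrows\mathbb{R}^{n_\nu}$ is lower hemicontinuous for every $\nu\in I$. Then $T$ is upper hemicontinuous with convex and compact values. Moreover, if in addition $U^s_\nu(x)$ is convex for each $x\in\mathbb{R}^n$ and each $\nu\in I$, then $T$ has non-empty values.
   Context: Vectors $x\in\mathbb{R}^n$ are written $x=(x^\nu,x^{-\nu})$. The induced relation is $x^\nu\succeq_{\nu,w^{-\nu}}y^\nu$ iff $(x^\nu,w^{-\nu})\succeq_\nu(y^\nu,w^{-\nu})$, with asymmetric part $\succ_{\nu,w^{-\nu}}$ ($a\succ b$ iff $a\succeq b$ and not $b\succeq a$). $U^s_\nu(x)=\{y^\nu\in\mathbb{R}^{n_\nu}:y^\nu\succ_{\nu,x^{-\nu}}x^\nu\}$. For $A\subset\mathbb{R}^m$, $z\in\mathbb{R}^m$, $\mathscr{N}_A(z)=\{z^*:\langle z^*,y-z\rangle\le0\ \forall y\in A\}$ if $A\ne\emptyset$ and $\mathscr{N}_A(z)=\mathbb{R}^m$ if $A=\emptyset$; $N_\nu(x)=\mathscr{N}_{U^s_\nu(x)}(x^\nu)$. $S_\nu(0,1)$ is the unit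 sphere of $\mathbb{R}^{n_\nu}$, and $\operatorname{conv}$ denotes convex hull. A set-valued map $F$ is upper hemicontinuous at $x$ if for every open $V\supset F(x)$ the set $\{z:F(z)\subset V\}$ is a neighborhood of $x$; lower hemicontinuous at $x$ if for every open $V$ with $V\cap F(x)\ne\emptyset$ the set $\{z:F(z)\cap V\neq\emptyset\}$ is a neighborhood of $x$; these hold for the map if they hold at every point. *)

theory Defs
  imports "HOL-Analysis.Analysis"
begin

text \<open>The coordinates of R^n are indexed by a finite type 'j; the map
  p :: 'j => 'i assigns each coordinate to its owning player (players = the finite
  type 'i). The space R^{n_nu} of player nu is identified with the coordinate
  subspace of real^'j supported on the coordinates owned by nu.\<close>

definition player_space :: "('j::finite \<Rightarrow> 'i) \<Rightarrow> 'i \<Rightarrow> (real^'j) set" where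
  "player_space p \<nu> = {y. \<forall>j. p j \<noteq> \<nu> \<longrightarrow> y $ j = 0}"

definition blk :: "('j::finite \<Rightarrow> 'i) \<Rightarrow> 'i \<Rightarrow> real^'j \<Rightarrow> real^'j" where
  "blk p \<nu> x = (\<chi> j. if p j = \<nu> then x $ j else 0)"

definition join :: "('j::finite \<Rightarrow> 'i) \<Rightarrow> 'i \<Rightarrow> real^'j \<Rightarrow> real^'j \<Rightarrow> real^'j" where
  "join p \<nu> y w = (\<chi> j. if p j = \<nu> then y $ j else w $ j)"

definition strict_part :: "('a \<Rightarrow> 'a \<Rightarrow> bool) \<Rightarrow> 'a \<Rightarrow> 'a \<Rightarrow> bool" where
  "strict_part r a b \<longleftrightarrow> r a b \<and> \<not> r b a"

definition Us :: "('j::finite \<Rightarrow> 'i) \<Rightarrow> ('i \<Rightarrow> real^'j \<Rightarrow> real^'j \<Rightarrow> bool) \<Rightarrow> 'i \<Rightarrow> real^'j \<Rightarrow> (real^'j) set" where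
  "Us p R \<nu> x = {y \<in> player_space p \<nu>.
      strict_part (R \<nu>) (join p \<nu> y x) (join p \<nu> (blk p \<nu> x) x)}"

text \<open>normal cone in the ambient space E (= R^m); E itself if A is empty\<close>
definition normal_cone :: "'a::real_inner set \<Rightarrow> 'a set \<Rightarrow> 'a \<Rightarrow> 'a set" where
  "normal_cone E A z = (if A = {} then E else {zs \<in> E. \<forall>y\<in>A. inner zs (y - z) \<le> 0})"

definition Nnu :: "('j::finite \<Rightarrow> 'i) \<Rightarrow> ('i \<Rightarrow> real^'j \<Rightarrow> real^'j \<Rightarrow> bool) \<Rightarrow> 'i \<Rightarrow> real^'j \<Rightarrow> (real^'j) set" where
  "Nnu p R \<nu> x = normal_cone (player_space p \<nu>) (Us p R \<nu> x) (blk p \<nu> x)"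

definition unit_sphere_nu :: "('j::finite \<Rightarrow> 'i) \<Rightarrow> 'i \<Rightarrow> (real^'j) set" where
  "unit_sphere_nu p \<nu> = {y \<in> player_space p \<nu>. norm y = 1}"

definition Tmap :: "('j::finite \<Rightarrow> 'i) \<Rightarrow> ('i \<Rightarrow> real^'j \<Rightarrow> real^'j \<Rightarrow> bool) \<Rightarrow> real^'j \<Rightarrow> (real^'j) set" where
  "Tmap p R x = {z. \<forall>\<nu>. blk p \<nu> z \<in> convex hull (Nnu p R \<nu> x \<inter> unit_sphere_nu p \<nu>)}"

definition upper_hemicont :: "('a::topological_space \<Rightarrow> 'b::topological_space set) \<Rightarrow> bool" where
  "upper_hemicont F \<longleftrightarrow> (\<forall>x V. open V \<and> F x \<subseteq> V \<longrightarrow>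
      (\<exists>W. open W \<and> x \<in> W \<and> W \<subseteq> {z. F z \<subseteq> V}))"

definition lower_hemicont :: "('a::topological_space \<Rightarrow> 'b::topological_space set) \<Rightarrow> bool" where
  "lower_hemicont F \<longleftrightarrow> (\<forall>x V. open V \<and> V \<inter> F x \<noteq> {} \<longrightarrow>
      (\<exists>W. open W \<and> x \<in> W \<and> W \<subseteq> {z. F z \<inter> V \<noteq> {}}))"

end

theory Submission
  imports Defs
begin

lemma subspace_ps: "subspace (player_space p \<nu>)"
  unfolding subspace_def player_space_def by auto

lemma closed_ps: "closed (player_space p \<nu>)"
proof -
  have "player_space p \<nu> = (\<Inter>j\<in>{j. p j \<noteq> \<nu>}. {y. y $ j = 0})"
    unfolding player_space_def by auto
  moreover have "closed {y::real^'a. y $ j = 0}" for j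
    by (intro closed_Collect_eq continuous_intros)
  ultimately show ?thesis by auto
qed

lemma blk_in_ps: "blk p \<nu> z \<in> player_space p \<nu>"
  unfolding blk_def player_space_def by auto

lemma blk_ps_self: "y \<in> player_space p \<nu> \<Longrightarrow> blk p \<nu> y = y"
  unfolding blk_def player_space_def by (auto simp: vec_eq_iff)

lemma blk_ps_other: "y \<in> player_space p \<nu> \<Longrightarrow> \<mu> \<noteq> \<nu> \<Longrightarrow> blk p \<mu> y = 0"
  unfolding blk_def player_space_def by (auto simp: vec_eq_iff)

lemma linear_blk: "linear (blk p \<nu>)"
  by (rule linearI) (auto simp: blk_def vec_eq_iff)

lemma bounded_linear_blk: "bounded_linear (blk p \<nu>)"
  by (rule linear_blk[unfolded linear_conv_bounded_linear])

lemma blk_sum: "blk p \<mu> (\<Sum>\<nu>\<in>(UNIV::'i::finite set). c \<nu>) = (\<Sum>\<nu>\<in>UNIV. blk p \<mu> (c \<nu>))"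
  by (rule linear_sum[OF linear_blk])

lemma blk_sum_ps:
  assumes "\<And>\<nu>. c \<nu> \<in> player_space p \<nu>"
  shows "blk p \<mu> (\<Sum>\<nu>\<in>(UNIV::'i::finite set). c \<nu>) = c \<mu>"
proof -
  have "(\<Sum>\<nu>\<in>(UNIV::'i set). blk p \<mu> (c \<nu>)) = blk p \<mu> (c \<mu>)"
  proof -
    have "(\<Sum>\<nu>\<in>(UNIV::'i set). blk p \<mu> (c \<nu>)) = (\<Sum>\<nu>\<in>(UNIV::'i set). if \<nu> = \<mu> then blk p \<mu> (c \<mu>) else 0)"
      by (rule sum.cong) (auto intro: blk_ps_other[OF assms])
    then show ?thesis by simp
  qed
  then show ?thesis using blk_sum blk_ps_self assms by metis
qed

lemma sum_blk: "(\<Sum>\<nu>\<in>(UNIV::'i::finite set). blk p \<nu> z) = z"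
proof -
  have "(\<Sum>\<nu>\<in>(UNIV::'i set). blk p \<nu> z) $ j = z $ j" for j
  proof -
    have "(\<Sum>\<nu>\<in>(UNIV::'i set). blk p \<nu> z) $ j = (\<Sum>\<nu>\<in>UNIV. (if p j = \<nu> then z $ j else 0))"
      by (simp add: sum_component blk_def)
    also have "\<dots> = z $ j" by (simp add: sum.delta)
    finally show ?thesis .
  qed
  then show ?thesis by (simp add: vec_eq_iff)
qed


lemma closed_Nnu: "closed (Nnu p R \<nu> x)"
proof (cases "Us p R \<nu> x = {}")
  case True
  then show ?thesis by (simp add: Nnu_def normal_cone_def closed_ps)
next
  case False
  have eq: "Nnu p R \<nu> x = player_space p \<nu> \<inter> (\<Inter>y\<in>Us p R \<nu> x. {zs. inner (y - blk p \<nu> x) zs \<le> 0})"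
    using False by (auto simp: Nnu_def normal_cone_def inner_commute)
  show ?thesis unfolding eq by (intro closed_Int closed_INT closed_ps ballI closed_halfspace_le)
qed

lemma compact_S: "compact (unit_sphere_nu p \<nu>)"
proof -
  have "unit_sphere_nu p \<nu> = player_space p \<nu> \<inter> sphere 0 1"
    by (auto simp: unit_sphere_nu_def)
  then show ?thesis using closed_Int_compact[OF closed_ps compact_sphere] by simp
qed

lemma compact_A: "compact (Nnu p R \<nu> x \<inter> unit_sphere_nu p \<nu>)"
  by (rule closed_Int_compact[OF closed_Nnu compact_S])

lemma compact_C: "compact (convex hull (Nnu p R \<nu> x \<inter> unit_sphere_nu p \<nu>))"
  by (rule compact_convex_hull[OF compact_A])

lemma C_ps: "convex hull (Nnu p R \<nu> x \<inter> unit_sphere_nu p \<nu>) \<subseteq> player_space p \<nu>"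
  by (rule hull_minimal) (auto simp: unit_sphere_nu_def subspace_imp_convex[OF subspace_ps])

lemma C_ball: "convex hull (Nnu p R \<nu> x \<inter> unit_sphere_nu p \<nu>) \<subseteq> cball 0 1"
  by (rule hull_minimal) (auto simp: unit_sphere_nu_def)

definition thick :: "'a::metric_space set \<Rightarrow> real \<Rightarrow> 'a set" where
  "thick E e = {w. \<exists>v\<in>E. dist w v < e}"

definition approxuhc :: "('a::metric_space \<Rightarrow> 'b::metric_space set) \<Rightarrow> 'a \<Rightarrow> bool" where
  "approxuhc F x \<longleftrightarrow> (\<forall>e>0. \<exists>d>0. \<forall>x'. dist x' x < d \<longrightarrow> F x' \<subseteq> thick (F x) e)"

lemma uhc_of:
  fixes F :: "'a::metric_space \<Rightarrow> 'b::metric_space set"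
  assumes "\<And>x. compact (F x)" "\<And>x. approxuhc F x"
  shows "upper_hemicont F"
  unfolding upper_hemicont_def
proof (intro allI impI)
  fix x V assume "open V \<and> F x \<subseteq> V"
  then obtain e where e: "e > 0" "(\<Union>v\<in>F x. ball v e) \<subseteq> V"
    using compact_subset_open_imp_ball_epsilon_subset[OF assms(1)] by metis
  obtain d where d: "d > 0" "\<forall>x'. dist x' x < d \<longrightarrow> F x' \<subseteq> thick (F x) e"
    using assms(2)[of x] e(1) unfolding approxuhc_def by blast
  have "ball x d \<subseteq> {z. F z \<subseteq> V}"
  proof
    fix z assume "z \<in> ball x d"
    then have "F z \<subseteq> thick (F x) e" using d by (simp add: dist_commute)
    also have "\<dots> \<subseteq> V" using e(2) unfolding thick_def by (force simp: dist_commute)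
    finally show "z \<in> {z. F z \<subseteq> V}" by simp
  qed
  then show "\<exists>W. open W \<and> x \<in> W \<and> W \<subseteq> {z. F z \<subseteq> V}"
    using d(1) by (intro exI[of _ "ball x d"]) auto
qed

lemma convex_thick:
  fixes E :: "'a::real_normed_vector set"
  assumes "convex E" shows "convex (thick E e)"
  unfolding convex_def thick_def
proof (intro ballI allI impI, simp)
  fix w1 w2 :: 'a and u v :: real
  assume "\<exists>v\<in>E. dist w1 v < e" "\<exists>v\<in>E. dist w2 v < e" and uv: "0 \<le> u" "0 \<le> v" "u + v = 1"
  then obtain v1 v2 where v: "v1 \<in> E" "v2 \<in> E" "dist w1 v1 < e" "dist w2 v2 < e" by blast
  have "u *\<^sub>R v1 + v *\<^sub>R v2 \<in> E" using assms v uv by (simp add: convexD)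
  moreover have "dist (u *\<^sub>R w1 + v *\<^sub>R w2) (u *\<^sub>R v1 + v *\<^sub>R v2) < e"
  proof -
    have "dist (u *\<^sub>R w1 + v *\<^sub>R w2) (u *\<^sub>R v1 + v *\<^sub>R v2) = norm (u *\<^sub>R (w1 - v1) + v *\<^sub>R (w2 - v2))"
      by (simp add: dist_norm algebra_simps)
    also have "\<dots> \<le> norm (u *\<^sub>R (w1 - v1)) + norm (v *\<^sub>R (w2 - v2))"
      by (rule norm_triangle_ineq)
    also have "\<dots> = u * norm (w1 - v1) + v * norm (w2 - v2)"
      using uv by simp
    also have "\<dots> < e"
    proof (cases "u = 0")
      case True then show ?thesis using v uv by (simp add: dist_norm)
    next
      case False
      then have "u * norm (w1 - v1) < u * e" using v uv by (simp add: dist_norm)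
      moreover have "v * norm (w2 - v2) \<le> v * e" using v uv by (simp add: dist_norm mult_left_mono)
      ultimately have "u * norm (w1 - v1) + v * norm (w2 - v2) < (u + v) * e" by (simp add: distrib_right)
      then show ?thesis using uv by simp
    qed
    finally show ?thesis .
  qed
  ultimately show "\<exists>va\<in>E. dist (u *\<^sub>R w1 + v *\<^sub>R w2) va < e" by blast
qed

lemma approxuhc_hull:
  fixes A :: "'a::metric_space \<Rightarrow> 'b::real_normed_vector set"
  assumes "approxuhc A x" shows "approxuhc (\<lambda>x. convex hull A x) x"
  unfolding approxuhc_def
proof (intro allI impI)
  fix e :: real assume "e > 0"
  then obtain d where d: "d > 0" "\<forall>x'. dist x' x < d \<longrightarrow> A x' \<subseteq> thick (A x) e"
    using assms unfolding approxuhc_def by blast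
  have sub: "thick (A x) e \<subseteq> thick (convex hull A x) e"
  proof
    fix w assume "w \<in> thick (A x) e"
    then obtain v where "v \<in> A x" "dist w v < e" by (auto simp: thick_def)
    moreover have "v \<in> convex hull A x" using \<open>v \<in> A x\<close> by (rule hull_inc)
    ultimately show "w \<in> thick (convex hull A x) e" unfolding thick_def by blast
  qed
  have cv: "convex (thick (convex hull A x) e)"
    by (rule convex_thick[OF convex_convex_hull])
  have "\<forall>x'. dist x' x < d \<longrightarrow> convex hull A x' \<subseteq> thick (convex hull A x) e"
  proof (intro allI impI)
    fix x' assume "dist x' x < d"
    then have "A x' \<subseteq> thick (convex hull A x) e" using d(2) sub by blast
    then show "convex hull A x' \<subseteq> thick (convex hull A x) e" using cv by (rule hull_minimal)
  qed
  then show "\<exists>d>0. \<forall>x'. dist x' x < d \<longrightarrow> convex hull A x' \<subseteq> thick (convex hull A x) e"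
    using d(1) by blast
qed


lemma step1:
  assumes lhc: "lower_hemicont (Us p R \<nu>)"
  shows "approxuhc (\<lambda>x. Nnu p R \<nu> x \<inter> unit_sphere_nu p \<nu>) x"
proof (rule ccontr)
  define A where "A = (\<lambda>x. Nnu p R \<nu> x \<inter> unit_sphere_nu p \<nu>)"
  assume "\<not> approxuhc (\<lambda>x. Nnu p R \<nu> x \<inter> unit_sphere_nu p \<nu>) x"
  then obtain e where e: "e > 0" and H: "\<forall>d>0. \<exists>x'. dist x' x < d \<and> \<not> A x' \<subseteq> thick (A x) e"
    unfolding approxuhc_def A_def by blast
  have "\<forall>n. \<exists>x' w. dist x' x < inverse (real (Suc n)) \<and> w \<in> A x' \<and> (\<forall>v\<in>A x. e \<le> dist w v)"
  proof
    fix n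
    have "inverse (real (Suc n)) > 0" by simp
    then obtain x' where x': "dist x' x < inverse (real (Suc n))" "\<not> A x' \<subseteq> thick (A x) e"
      using H by blast
    then obtain w where "w \<in> A x'" "w \<notin> thick (A x) e" by blast
    then show "\<exists>x' w. dist x' x < inverse (real (Suc n)) \<and> w \<in> A x' \<and> (\<forall>v\<in>A x. e \<le> dist w v)"
      using x'(1) by (intro exI[of _ x'] exI[of _ w]) (auto simp: thick_def not_less)
  qed
  then obtain X Wn where XW: "\<And>n. dist (X n) x < inverse (real (Suc n))"
     "\<And>n. Wn n \<in> A (X n)" "\<And>n. \<forall>v\<in>A x. e \<le> dist (Wn n) v"
    by metis
  have "\<forall>n. Wn n \<in> unit_sphere_nu p \<nu>" using XW(2) unfolding A_def by blast
  then obtain w r where w: "w \<in> unit_sphere_nu p \<nu>" "strict_mono r" "(Wn \<circ> r) \<longlonglongrightarrow> w"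
    using compact_imp_seq_compact[OF compact_S] unfolding seq_compact_def by metis
  have "(\<lambda>n. dist (X n) x) \<longlonglongrightarrow> 0"
  proof (rule tendsto_sandwich[of "\<lambda>_. 0" _ _ "\<lambda>n. inverse (real (Suc n))"])
    show "\<forall>\<^sub>F n in sequentially. 0 \<le> dist (X n) x" by simp
    show "\<forall>\<^sub>F n in sequentially. dist (X n) x \<le> inverse (real (Suc n))"
      by (intro always_eventually allI less_imp_le XW(1))
    show "(\<lambda>_. 0::real) \<longlonglongrightarrow> 0" by simp
    show "(\<lambda>n. inverse (real (Suc n))) \<longlonglongrightarrow> 0" by (rule LIMSEQ_inverse_real_of_nat)
  qed
  then have "X \<longlonglongrightarrow> x" using tendsto_dist_iff by blast
  then have Xr: "(X \<circ> r) \<longlonglongrightarrow> x" using w(2) by (rule LIMSEQ_subseq_LIMSEQ)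
  have far: "e \<le> dist w v" if v: "v \<in> A x" for v
  proof -
    have "(\<lambda>n. dist ((Wn \<circ> r) n) v) \<longlonglongrightarrow> dist w v"
      using w(3) by (intro tendsto_intros)
    moreover have "\<forall>n. e \<le> dist ((Wn \<circ> r) n) v" using XW(3) v by simp
    ultimately show ?thesis
      by (meson LIMSEQ_le_const)
  qed
  have "w \<notin> Nnu p R \<nu> x"
  proof
    assume "w \<in> Nnu p R \<nu> x"
    then have "w \<in> A x" using w(1) unfolding A_def by blast
    then show False using far[of w] e by simp
  qed
  moreover have wps: "w \<in> player_space p \<nu>" and nw: "norm w = 1"
    using w(1) unfolding unit_sphere_nu_def by auto
  ultimately have "Us p R \<nu> x \<noteq> {}" "\<exists>y\<in>Us p R \<nu> x. \<not> inner w (y - blk p \<nu> x) \<le> 0"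
    unfolding Nnu_def normal_cone_def by (auto split: if_splits)
  then obtain y where y: "y \<in> Us p R \<nu> x" and c: "inner w (y - blk p \<nu> x) > 0"
    by (meson not_le)
  define c where "c = inner w (y - blk p \<nu> x)"
  have c0: "c > 0" using c c_def by simp
  have "open (ball y (c/4)) \<and> ball y (c/4) \<inter> Us p R \<nu> x \<noteq> {}"
  proof -
    have "y \<in> ball y (c/4)" using c0 by simp
    then show ?thesis using y by blast
  qed
  then obtain W where W: "open W" "x \<in> W" "W \<subseteq> {z. Us p R \<nu> z \<inter> ball y (c/4) \<noteq> {}}"
    using lhc unfolding lower_hemicont_def by blast
  have ev1: "eventually (\<lambda>n. (X \<circ> r) n \<in> W) sequentially"
    using Xr W(1,2) by (rule topological_tendstoD)
  have "(\<lambda>n. inner ((Wn \<circ> r) n) (y - blk p \<nu> x)) \<longlonglongrightarrow> c"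
    unfolding c_def using w(3) by (intro tendsto_intros)
  then have ev2: "eventually (\<lambda>n. c/2 < inner ((Wn \<circ> r) n) (y - blk p \<nu> x)) sequentially"
    using c0 by (intro order_tendstoD(1)) auto
  have "(\<lambda>n. blk p \<nu> ((X \<circ> r) n)) \<longlonglongrightarrow> blk p \<nu> x"
    using bounded_linear.tendsto[OF bounded_linear_blk Xr] .
  then have ev3: "eventually (\<lambda>n. dist (blk p \<nu> ((X \<circ> r) n)) (blk p \<nu> x) < c/4) sequentially"
  proof -
    have "c/4 > 0" using c0 by simp
    then show ?thesis using \<open>(\<lambda>n. blk p \<nu> ((X \<circ> r) n)) \<longlonglongrightarrow> blk p \<nu> x\<close>
      unfolding tendsto_iff by blast
  qed
  obtain n where n1: "(X \<circ> r) n \<in> W" and n2: "c/2 < inner ((Wn \<circ> r) n) (y - blk p \<nu> x)"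
    and n3: "dist (blk p \<nu> ((X \<circ> r) n)) (blk p \<nu> x) < c/4"
    using eventually_happens'[OF sequentially_bot eventually_conj[OF ev1 eventually_conj[OF ev2 ev3]]]
    by blast
  define x' where "x' = X (r n)"
  define w' where "w' = Wn (r n)"
  obtain y' where y': "y' \<in> Us p R \<nu> x'" "dist y y' < c/4"
  proof -
    have "Us p R \<nu> x' \<inter> ball y (c/4) \<noteq> {}" using W(3) n1 unfolding x'_def by auto
    then show ?thesis using that by (auto simp: mem_ball)
  qed
  have "w' \<in> Nnu p R \<nu> x'" "w' \<in> unit_sphere_nu p \<nu>"
    using XW(2)[of "r n"] unfolding A_def w'_def x'_def by auto
  then have le: "inner w' (y' - blk p \<nu> x') \<le> 0" and nw': "norm w' = 1"
    using y'(1) unfolding Nnu_def normal_cone_def unit_sphere_nu_def by (auto split: if_splits)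
  have eq: "inner w' (y' - blk p \<nu> x') = inner w' (y - blk p \<nu> x) + inner w' ((y' - y) - (blk p \<nu> x' - blk p \<nu> x))"
    by (simp add: inner_diff_right)
  have "\<bar>inner w' ((y' - y) - (blk p \<nu> x' - blk p \<nu> x))\<bar> \<le> norm w' * norm ((y' - y) - (blk p \<nu> x' - blk p \<nu> x))"
    by (rule Cauchy_Schwarz_ineq2)
  also have "\<dots> = norm ((y' - y) - (blk p \<nu> x' - blk p \<nu> x))" using nw' by simp
  also have "\<dots> \<le> norm (y' - y) + norm (blk p \<nu> x' - blk p \<nu> x)" by (rule norm_triangle_ineq4)
  also have "\<dots> < c/4 + c/4"
    using y'(2) n3 unfolding x'_def by (simp add: dist_norm norm_minus_commute add_strict_mono)
  finally have "\<bar>inner w' ((y' - y) - (blk p \<nu> x' - blk p \<nu> x))\<bar> < c/2" by simp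
  moreover have "c/2 < inner w' (y - blk p \<nu> x)" using n2 unfolding w'_def by simp
  ultimately have "inner w' (y' - blk p \<nu> x') > 0" using eq by linarith
  then show False using le by simp
qed


lemma step3:
  fixes C :: "'i::finite \<Rightarrow> 'a::metric_space \<Rightarrow> (real^'j::finite) set"
  assumes au: "\<And>\<nu>. approxuhc (C \<nu>) x" and ps: "\<And>\<nu> x. C \<nu> x \<subseteq> player_space p \<nu>"
  shows "approxuhc (\<lambda>x. {z. \<forall>\<nu>. blk p \<nu> z \<in> C \<nu> x}) x"
  unfolding approxuhc_def
proof (intro allI impI)
  fix e :: real assume e: "e > 0"
  define k where "k = real CARD('i)"
  have k: "k > 0" unfolding k_def by simp
  have "\<forall>\<nu>. \<exists>d>0. \<forall>x'. dist x' x < d \<longrightarrow> C \<nu> x' \<subseteq> thick (C \<nu> x) (e/k)"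
    using au e k unfolding approxuhc_def by simp
  then obtain D where D: "\<And>\<nu>. D \<nu> > 0" "\<And>\<nu> x'. dist x' x < D \<nu> \<Longrightarrow> C \<nu> x' \<subseteq> thick (C \<nu> x) (e/k)"
    by metis
  define d where "d = Min (range D)"
  have d0: "d > 0" unfolding d_def using D(1) by (simp add: Min_gr_iff)
  have dle: "d \<le> D \<nu>" for \<nu> unfolding d_def by simp
  have "\<forall>x'. dist x' x < d \<longrightarrow> {z. \<forall>\<nu>. blk p \<nu> z \<in> C \<nu> x'} \<subseteq> thick {z. \<forall>\<nu>. blk p \<nu> z \<in> C \<nu> x} e"
  proof (intro allI impI subsetI)
    fix x' z assume dx: "dist x' x < d" and z: "z \<in> {z. \<forall>\<nu>. blk p \<nu> z \<in> C \<nu> x'}"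
    have "\<forall>\<nu>. \<exists>c\<in>C \<nu> x. dist (blk p \<nu> z) c < e/k"
    proof
      fix \<nu>
      have "blk p \<nu> z \<in> thick (C \<nu> x) (e/k)"
        using D(2)[of x' \<nu>] dx dle[of \<nu>] z by auto
      then show "\<exists>c\<in>C \<nu> x. dist (blk p \<nu> z) c < e/k" unfolding thick_def by blast
    qed
    then obtain cc where cc: "\<And>\<nu>. cc \<nu> \<in> C \<nu> x" "\<And>\<nu>. dist (blk p \<nu> z) (cc \<nu>) < e/k"
      by metis
    define v where "v = (\<Sum>\<nu>\<in>UNIV. cc \<nu>)"
    have ccps: "\<And>\<nu>. cc \<nu> \<in> player_space p \<nu>" using cc(1) ps by blast
    have "blk p \<mu> v = cc \<mu>" for \<mu> unfolding v_def by (rule blk_sum_ps[OF ccps])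
    then have vin: "v \<in> {z. \<forall>\<nu>. blk p \<nu> z \<in> C \<nu> x}" using cc(1) by simp
    have "dist z v = norm ((\<Sum>\<nu>\<in>UNIV. blk p \<nu> z) - (\<Sum>\<nu>\<in>UNIV. cc \<nu>))"
      unfolding v_def dist_norm sum_blk by simp
    also have "\<dots> = norm (\<Sum>\<nu>\<in>UNIV. blk p \<nu> z - cc \<nu>)"
      by (simp add: sum_subtractf)
    also have "\<dots> \<le> (\<Sum>\<nu>\<in>UNIV. norm (blk p \<nu> z - cc \<nu>))"
      by (rule norm_sum)
    also have "\<dots> < (\<Sum>\<nu>\<in>(UNIV::'i set). e/k)"
      using cc(2) by (intro sum_strict_mono) (auto simp: dist_norm)
    also have "\<dots> = e" unfolding k_def by simp
    finally show "z \<in> thick {z. \<forall>\<nu>. blk p \<nu> z \<in> C \<nu> x} e"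
      unfolding thick_def using vin by blast
  qed
  then show "\<exists>d>0. \<forall>x'. dist x' x < d \<longrightarrow> {z. \<forall>\<nu>. blk p \<nu> z \<in> C \<nu> x'} \<subseteq> thick {z. \<forall>\<nu>. blk p \<nu> z \<in> C \<nu> x} e"
    using d0 by blast
qed


lemma Tmap_compact:
  fixes p :: "'j::finite \<Rightarrow> 'i::finite"
  shows "compact (Tmap p R x)"
proof -
  have eq: "Tmap p R x = (\<Inter>\<nu>. blk p \<nu> -` (convex hull (Nnu p R \<nu> x \<inter> unit_sphere_nu p \<nu>)))"
    unfolding Tmap_def by auto
  have "closed (blk p \<nu> -` (convex hull (Nnu p R \<nu> x \<inter> unit_sphere_nu p \<nu>)))" for \<nu>
    by (rule continuous_closed_vimage[OF compact_imp_closed[OF compact_C]])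
       (rule linear_continuous_at[OF bounded_linear_blk])
  then have cl: "closed (Tmap p R x)" unfolding eq by blast
  have "Tmap p R x \<subseteq> cball 0 (real CARD('i))"
  proof
    fix z assume z: "z \<in> Tmap p R x"
    have "norm z = norm (\<Sum>\<nu>\<in>UNIV. blk p \<nu> z)" by (simp add: sum_blk)
    also have "\<dots> \<le> (\<Sum>\<nu>\<in>(UNIV::'i set). norm (blk p \<nu> z))" by (rule norm_sum)
    also have "\<dots> \<le> (\<Sum>\<nu>\<in>(UNIV::'i set). 1)"
    proof (rule sum_mono)
      fix \<nu> assume "\<nu> \<in> (UNIV::'i set)"
      have "blk p \<nu> z \<in> convex hull (Nnu p R \<nu> x \<inter> unit_sphere_nu p \<nu>)"
        using z unfolding Tmap_def by blast
      then have "blk p \<nu> z \<in> cball 0 1" using C_ball[of p R \<nu> x] by blast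
      then show "norm (blk p \<nu> z) \<le> 1" by simp
    qed
    finally show "z \<in> cball 0 (real CARD('i))" by simp
  qed
  then have "bounded (Tmap p R x)" by (rule bounded_subset[OF bounded_cball])
  then show ?thesis using cl compact_eq_bounded_closed by blast
qed

lemma Tmap_convex: "convex (Tmap p R x)"
  unfolding convex_def
proof (intro ballI allI impI)
  fix a b u v assume a: "a \<in> Tmap p R x" and b: "b \<in> Tmap p R x" and uv: "0 \<le> u" "0 \<le> v" "u + v = (1::real)"
  have "blk p \<nu> (u *\<^sub>R a + v *\<^sub>R b) = u *\<^sub>R blk p \<nu> a + v *\<^sub>R blk p \<nu> b" for \<nu>
    by (simp add: blk_def vec_eq_iff)
  moreover have "u *\<^sub>R blk p \<nu> a + v *\<^sub>R blk p \<nu> b \<in> convex hull (Nnu p R \<nu> x \<inter> unit_sphere_nu p \<nu>)" for \<nu>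
    using a b uv unfolding Tmap_def by (intro convexD[OF convex_convex_hull]) auto
  ultimately show "u *\<^sub>R a + v *\<^sub>R b \<in> Tmap p R x" unfolding Tmap_def by simp
qed

lemma A_nonempty:
  fixes p :: "'j::finite \<Rightarrow> 'i"
  assumes "surj p" and cvx: "convex (Us p R \<nu> x)"
  shows "\<exists>a. a \<in> Nnu p R \<nu> x \<inter> unit_sphere_nu p \<nu>"
proof (cases "Us p R \<nu> x = {}")
  case True
  obtain j where j: "\<nu> = p j" using surjD[OF assms(1), of \<nu>] by blast
  have "axis j (1::real) \<in> player_space p \<nu>" unfolding player_space_def axis_def j by simp
  then show ?thesis using True by (intro exI[of _ "axis j 1"]) (simp add: Nnu_def normal_cone_def unit_sphere_nu_def)
next
  case False
  define S where "S = (\<Union>a\<in>{blk p \<nu> x}. \<Union>y\<in>Us p R \<nu> x. {a - y})"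
  have "convex S" unfolding S_def by (rule convex_differences[OF convex_singleton cvx])
  moreover have "S \<noteq> {}" using False unfolding S_def by auto
  moreover have "0 \<notin> S"
  proof
    assume "0 \<in> S"
    then have "blk p \<nu> x \<in> Us p R \<nu> x" unfolding S_def by auto
    then show False by (simp add: Us_def strict_part_def)
  qed
  ultimately obtain a where a: "a \<in> span S" "a \<noteq> 0" "\<And>s. s \<in> S \<Longrightarrow> 0 \<le> a \<bullet> s"
    by (rule separating_hyperplane_set_0_inspan) blast+
  have "S \<subseteq> player_space p \<nu>"
  proof
    fix s assume "s \<in> S"
    then obtain y where y: "y \<in> Us p R \<nu> x" "s = blk p \<nu> x - y" unfolding S_def by blast
    have "y \<in> player_space p \<nu>" using y(1) unfolding Us_def by blast
    then show "s \<in> player_space p \<nu>" unfolding y(2)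
      by (rule subspace_diff[OF subspace_ps blk_in_ps])
  qed
  then have aps: "a \<in> player_space p \<nu>" using a(1) span_minimal[OF _ subspace_ps, of S p \<nu>] by blast
  define a' where "a' = a /\<^sub>R norm a"
  have a'ps: "a' \<in> player_space p \<nu>" unfolding a'_def by (rule subspace_scale[OF subspace_ps aps])
  have na': "norm a' = 1" unfolding a'_def using a(2) by simp
  have "inner a' (y - blk p \<nu> x) \<le> 0" if y: "y \<in> Us p R \<nu> x" for y
  proof -
    have "0 \<le> a \<bullet> (blk p \<nu> x - y)" using a(3) y unfolding S_def by auto
    then have "a \<bullet> (y - blk p \<nu> x) \<le> 0" by (simp add: inner_diff_right)
    then show ?thesis unfolding a'_def using a(2)
      by (simp add: mult_nonneg_nonpos)
  qed
  then have "a' \<in> Nnu p R \<nu> x" using a'ps False unfolding Nnu_def normal_cone_def by simp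
  then show ?thesis using a'ps na' unfolding unit_sphere_nu_def by blast
qed

theorem proposition1:
  fixes p :: "'j::finite \<Rightarrow> 'i::finite"
    and R :: "'i \<Rightarrow> real^'j \<Rightarrow> real^'j \<Rightarrow> bool"
  assumes "surj p"
    and "\<forall>\<nu>. lower_hemicont (Us p R \<nu>)"
  shows "upper_hemicont (Tmap p R)
    \<and> (\<forall>x. convex (Tmap p R x) \<and> compact (Tmap p R x))
    \<and> ((\<forall>\<nu> x. convex (Us p R \<nu> x)) \<longrightarrow> (\<forall>x. Tmap p R x \<noteq> {}))"
proof (intro conjI allI impI)
  have Teq: "Tmap p R = (\<lambda>x. {z. \<forall>\<nu>. blk p \<nu> z \<in> convex hull (Nnu p R \<nu> x \<inter> unit_sphere_nu p \<nu>)})"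
    unfolding Tmap_def by (rule ext) simp
  have "approxuhc (Tmap p R) x" for x
    unfolding Teq
  proof (rule step3)
    fix \<nu>
    show "approxuhc (\<lambda>x. convex hull (Nnu p R \<nu> x \<inter> unit_sphere_nu p \<nu>)) x"
    proof -
      have "lower_hemicont (Us p R \<nu>)" using assms(2) by blast
      then show ?thesis by (intro approxuhc_hull step1)
    qed
    show "\<And>x. convex hull (Nnu p R \<nu> x \<inter> unit_sphere_nu p \<nu>) \<subseteq> player_space p \<nu>"
      by (rule C_ps)
  qed
  then show "upper_hemicont (Tmap p R)"
    by (rule uhc_of[OF Tmap_compact])
next
  fix x show "convex (Tmap p R x)" by (rule Tmap_convex)
next
  fix x show "compact (Tmap p R x)" by (rule Tmap_compact)
next
  fix x assume cv: "\<forall>\<nu> x. convex (Us p R \<nu> x)"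
  have "\<forall>\<nu>. \<exists>a. a \<in> Nnu p R \<nu> x \<inter> unit_sphere_nu p \<nu>"
  proof
    fix \<nu>
    have "convex (Us p R \<nu> x)" using cv by blast
    then show "\<exists>a. a \<in> Nnu p R \<nu> x \<inter> unit_sphere_nu p \<nu>" by (rule A_nonempty[OF assms(1)])
  qed
  then obtain a where a: "\<And>\<nu>. a \<nu> \<in> Nnu p R \<nu> x \<inter> unit_sphere_nu p \<nu>" by metis
  have aps: "\<And>\<nu>. a \<nu> \<in> player_space p \<nu>" using a unfolding unit_sphere_nu_def by blast
  have "blk p \<mu> (\<Sum>\<nu>\<in>UNIV. a \<nu>) \<in> convex hull (Nnu p R \<mu> x \<inter> unit_sphere_nu p \<mu>)" for \<mu>
  proof -
    have "blk p \<mu> (\<Sum>\<nu>\<in>UNIV. a \<nu>) = a \<mu>" by (rule blk_sum_ps[OF aps])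
    moreover have "a \<mu> \<in> convex hull (Nnu p R \<mu> x \<inter> unit_sphere_nu p \<mu>)" by (rule hull_inc[OF a])
    ultimately show ?thesis by simp
  qed
  then have "(\<Sum>\<nu>\<in>UNIV. a \<nu>) \<in> Tmap p R x"
    unfolding Tmap_def by blast
  then show "Tmap p R x \<noteq> {}" by blast
qed

end
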